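(* Let $G$ be an infinite locally finite connected graph and $(F_i)_{i=1}^\infty$ a sequence of finite connected subgraphs of $G$ such that, for all $i\ge1$, $F_i\le F_{i+1}$ and $N_G(F_i)\subseteq V(F_{i+1})$. Set $F=\bigcup_{i=1}^\infty F_i$. Suppose that for every $i\ge1$ and every component $H$ of $G-V(F_{i+1})$ there is a component $D$ of $F_{i+1}-V(F_i)$ with $N_G(H)\subseteq V(D)$. Then $F$ is a spanning subgraph of $G$ that is faithful to $G$.
   Context: For $X\subseteq V(G)$, $N_G(X)=\bigcup_{v\in X}N_G(v)\setminus X$; for a subgraph $H$, $N_G(H)=N_G(V(H))$. A ray is a one-way infinite path; two rays of a graph $H$ are equivalent in $H$ if for every finite $S\subseteq V(H)$ some component of $H-S$ contains tails of both; the classes are the ends of $H$. A subgraph $F$ of $G$ is faithful to $G$ if (i) every end of $G$ contains a ray of $F$, and (ii) any two rays of $F$ are equivalent in $F$ if and only if they are equivalent in $G$. *)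

theory Defs
  imports Main
begin

type_synonym 'a graph = "'a set \<times> 'a set set"

definition verts :: "'a graph \<Rightarrow> 'a set" where "verts G = fst G"
definition edges :: "'a graph \<Rightarrow> 'a set set" where "edges G = snd G"

definition graph :: "'a graph \<Rightarrow> bool" where
  "graph G \<longleftrightarrow> (\<forall>e\<in>edges G. \<exists>u v. u \<noteq> v \<and> u \<in> verts G \<and> v \<in> verts G \<and> e = {u, v})"

definition adj :: "'a graph \<Rightarrow> 'a \<Rightarrow> 'a \<Rightarrow> bool" where
  "adj G u v \<longleftrightarrow> {u, v} \<in> edges G"

definition subgraph :: "'a graph \<Rightarrow> 'a graph \<Rightarrow> bool" where
  "subgraph H G \<longleftrightarrow> graph H \<and> verts H \<subseteq> verts G \<and> edges H \<subseteq> edges G"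

definition spanning_subgraph :: "'a graph \<Rightarrow> 'a graph \<Rightarrow> bool" where
  "spanning_subgraph H G \<longleftrightarrow> subgraph H G \<and> verts H = verts G"

definition locally_finite :: "'a graph \<Rightarrow> bool" where
  "locally_finite G \<longleftrightarrow> (\<forall>v\<in>verts G. finite {w. adj G v w})"

definition finite_graph :: "'a graph \<Rightarrow> bool" where
  "finite_graph G \<longleftrightarrow> finite (verts G) \<and> finite (edges G)"

definition connected_graph :: "'a graph \<Rightarrow> bool" where
  "connected_graph G \<longleftrightarrow> verts G \<noteq> {} \<and> (\<forall>u\<in>verts G. \<forall>v\<in>verts G. (adj G)\<^sup>*\<^sup>* u v)"

definition nbhd :: "'a graph \<Rightarrow> 'a set \<Rightarrow> 'a set" where
  "nbhd G X = {w. \<exists>v\<in>X. adj G v w} - X"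

definition del_verts :: "'a graph \<Rightarrow> 'a set \<Rightarrow> 'a graph" where
  "del_verts G X = (verts G - X, {e \<in> edges G. e \<inter> X = {}})"

text \<open>Components: maximal connected subgraphs, i.e. the subgraph induced on the
set of vertices reachable from some vertex.\<close>
definition component :: "'a graph \<Rightarrow> 'a graph \<Rightarrow> bool" where
  "component G H \<longleftrightarrow> (\<exists>v\<in>verts G. verts H = {w. (adj G)\<^sup>*\<^sup>* v w}
      \<and> edges H = {e \<in> edges G. e \<subseteq> verts H})"

definition graph_Union :: "(nat \<Rightarrow> 'a graph) \<Rightarrow> 'a graph" where
  "graph_Union F = ((\<Union>i. verts (F i)), (\<Union>i. edges (F i)))"

definition ray :: "'a graph \<Rightarrow> (nat \<Rightarrow> 'a) \<Rightarrow> bool" where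
  "ray H r \<longleftrightarrow> inj r \<and> (\<forall>n. r n \<in> verts H) \<and> (\<forall>n. adj H (r n) (r (Suc n)))"

definition ray_equiv :: "'a graph \<Rightarrow> (nat \<Rightarrow> 'a) \<Rightarrow> (nat \<Rightarrow> 'a) \<Rightarrow> bool" where
  "ray_equiv H r s \<longleftrightarrow> (\<forall>S. finite S \<and> S \<subseteq> verts H \<longrightarrow>
     (\<exists>C. component (del_verts H S) C \<and>
        (\<exists>k. \<forall>n\<ge>k. r n \<in> verts C \<and> s n \<in> verts C \<and>
                    {r n, r (Suc n)} \<in> edges C \<and> {s n, s (Suc n)} \<in> edges C)))"

text \<open>Faithful subgraph: every end of \<open>G\<close> (the class of some ray of \<open>G\<close>) contains
a ray of \<open>F\<close>, and rays of \<open>F\<close> are equivalent in \<open>F\<close> iff equivalent in \<open>G\<close>.\<close>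
definition faithful :: "'a graph \<Rightarrow> 'a graph \<Rightarrow> bool" where
  "faithful F G \<longleftrightarrow> subgraph F G \<and>
     (\<forall>r. ray G r \<longrightarrow> (\<exists>s. ray F s \<and> ray_equiv G r s)) \<and>
     (\<forall>r s. ray F r \<longrightarrow> ray F s \<longrightarrow> (ray_equiv F r s \<longleftrightarrow> ray_equiv G r s))"

end

theory Submission imports Defs begin
primrec st :: "(nat \<Rightarrow> 'a list) \<Rightarrow> nat \<Rightarrow> nat \<times> 'a list" where
  "st L 0 = (0, L 0)"
| "st L (Suc n) = (if 2 < length (snd (st L n)) then (fst (st L n), tl (snd (st L n)))
                   else (Suc (fst (st L n)), L (Suc (fst (st L n)))))"

lemma st_inv:
  assumes len: "\<And>j. 2 \<le> length (L j)"
  shows "2 \<le> length (snd (st L n)) \<and> (\<exists>p. L (fst (st L n)) = p @ snd (st L n))"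
proof (induction n)
  case 0 then show ?case using len by simp
next
  case (Suc n)
  obtain j l where jl: "st L n = (j, l)" by fastforce
  show ?case
  proof (cases "2 < length l")
    case True
    then obtain a t where l: "l = a # t" by (cases l) auto
    from Suc jl obtain p where "L j = p @ l" by auto
    then have "L j = (p @ [a]) @ t" using l by simp
    then show ?thesis using True jl l by auto
  next
    case False then show ?thesis using jl len by simp
  qed
qed

lemma st_fst_mono: "fst (st L n) \<le> fst (st L (Suc n))"
  by simp

lemma st_progress: "st L n = (j, l) \<Longrightarrow> \<exists>n'. fst (st L n') = Suc j"
proof (induction "length l" arbitrary: n l rule: less_induct)
  case less
  show ?case
  proof (cases "2 < length l")
    case True
    then have "st L (Suc n) = (j, tl l)" using less.prems by simp
    moreover have "length (tl l) < length l" using True by simp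
    ultimately show ?thesis using less.hyps by blast
  next
    case False
    then have "fst (st L (Suc n)) = Suc j" using less.prems by simp
    then show ?thesis by blast
  qed
qed

lemma st_unbounded: "\<exists>n. j \<le> fst (st L n)"
proof (induction j)
  case 0 then show ?case by simp
next
  case (Suc j)
  then obtain n where n: "j \<le> fst (st L n)" by blast
  show ?case
  proof (cases "j = fst (st L n)")
    case True
    then obtain n' where "fst (st L n') = Suc j" using st_progress[of L n j "snd (st L n)"] by auto
    then show ?thesis by (metis order_refl)
  next
    case False then show ?thesis using n by (metis Suc_leI le_neq_implies_less)
  qed
qed

lemma st_eventually: "\<exists>n0. \<forall>n\<ge>n0. j \<le> fst (st L n)"
proof -
  obtain n0 where n0: "j \<le> fst (st L n0)" using st_unbounded by blast
  have "fst (st L n0) \<le> fst (st L n)" if "n0 \<le> n" for n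
    using that by (induction n rule: dec_induct) (auto intro: le_trans st_fst_mono)
  then show ?thesis using n0 le_trans by blast
qed

lemma walk_exists:
  assumes len: "\<And>j. 2 \<le> length (L j)" and sc: "\<And>j. successively Q (L j)"
    and lh: "\<And>j. last (L j) = hd (L (Suc j))"
  shows "\<exists>w. (\<forall>n. Q (w n) (w (Suc n))) \<and> (\<forall>j. \<exists>n0. \<forall>n\<ge>n0. \<exists>j'\<ge>j. w n \<in> set (L j'))"
proof -
  define w where "w n = hd (snd (st L n))" for n
  have step: "Q (w n) (w (Suc n))" for n
  proof -
    obtain j l where jl: "st L n = (j, l)" by fastforce
    from st_inv[of L n, OF len] jl obtain p where p: "L j = p @ l" and l2: "2 \<le> length l" by auto
    have scl: "successively Q l" using sc[of j] p by (simp add: successively_append_iff)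
    obtain a b t where l: "l = a # b # t" using l2 by (metis Suc_le_length_iff numeral_2_eq_2)
    have Qab: "Q a b" using scl l by simp
    show ?thesis
    proof (cases "2 < length l")
      case True then show ?thesis using jl l Qab by (simp add: w_def)
    next
      case False
      then have t: "t = []" using l by simp
      have "last (L j) = b" using p l t by simp
      then have "hd (L (Suc j)) = b" using lh by simp
      then show ?thesis using False jl l Qab by (simp add: w_def)
    qed
  qed
  have ev: "\<exists>n0. \<forall>n\<ge>n0. \<exists>j'\<ge>j. w n \<in> set (L j')" for j
  proof -
    obtain n0 where n0: "\<forall>n\<ge>n0. j \<le> fst (st L n)" using st_eventually by blast
    have "w n \<in> set (L (fst (st L n)))" for n
    proof -
      obtain p where p: "L (fst (st L n)) = p @ snd (st L n)" and l2: "2 \<le> length (snd (st L n))"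
        using st_inv[of L n, OF len] by auto
      then have "snd (st L n) \<noteq> []" by auto
      then show ?thesis using p unfolding w_def by (metis Un_iff hd_in_set set_append)
    qed
    then show ?thesis using n0 by blast
  qed
  show ?thesis using step ev by blast
qed

lemma ray_extract:
  assumes st: "\<And>n. Q (w n) (w (Suc n))" and fo: "\<And>v. finite {n. w n = v}"
  shows "\<exists>s. inj s \<and> (\<forall>k. Q (s k) (s (Suc k))) \<and> (\<forall>k. \<exists>n\<ge>k. s k = w n)"
proof -
  define La where "La n = Max {m. w m = w n}" for n
  have La1: "w (La n) = w n" "n \<le> La n" for n
  proof -
    have "La n \<in> {m. w m = w n}" unfolding La_def by (rule Max_in) (use fo in auto)
    then show "w (La n) = w n" by simp
    show "n \<le> La n" unfolding La_def by (rule Max_ge) (use fo in auto)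
  qed
  have La2: "w m = w n \<Longrightarrow> m \<le> La n" for m n
    unfolding La_def by (rule Max_ge) (use fo in auto)
  define p where "p = rec_nat (La 0) (\<lambda>_ q. La (Suc q))"
  have p0: "p 0 = La 0" and pS: "p (Suc k) = La (Suc (p k))" for k by (simp_all add: p_def)
  have smono: "strict_mono p"
    unfolding strict_mono_Suc_iff using La1(2) pS by (metis Suc_le_lessD)
  have pk: "k \<le> p k" for k using smono by (simp add: strict_mono_imp_increasing)
  have plast: "\<exists>n. p k = La n" for k by (cases k) (auto simp: p0 pS)
  define s where "s k = w (p k)" for k
  have inj: "inj s"
  proof (rule injI)
    fix a b assume ab: "s a = s b"
    show "a = b"
    proof (rule ccontr)
      assume "a \<noteq> b"
      then consider "a < b" | "b < a" by linarith
      then show False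
      proof cases
        case 1
        obtain n where n: "p a = La n" using plast by blast
        have "w (p b) = w n" using ab n La1 by (simp add: s_def)
        then have "p b \<le> p a" using La2 n by simp
        then show False using 1 smono by (simp add: strict_mono_less_eq)
      next
        case 2
        obtain n where n: "p b = La n" using plast by blast
        have "w (p a) = w n" using ab n La1 by (simp add: s_def)
        then have "p a \<le> p b" using La2 n by simp
        then show False using 2 smono by (simp add: strict_mono_less_eq)
      qed
    qed
  qed
  have "Q (s k) (s (Suc k))" for k
    using st[of "p k"] La1(1)[of "Suc (p k)"] by (simp add: s_def pS)
  moreover have "\<forall>k. \<exists>n\<ge>k. s k = w n" using pk s_def by blast
  ultimately show ?thesis using inj by blast
qed



lemma adj_sym: "adj G u v = adj G v u"
  by (simp add: adj_def insert_commute)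

lemma symp_adj: "symp (adj G)"
  by (simp add: symp_def adj_sym)

lemma rtr_sym: "(adj G)\<^sup>*\<^sup>* a b \<Longrightarrow> (adj G)\<^sup>*\<^sup>* b a"
  by (metis symp_adj symp_rtranclp sympD)

lemma del_adj: "adj (del_verts G X) u v \<longleftrightarrow> adj G u v \<and> u \<notin> X \<and> v \<notin> X"
  by (auto simp: adj_def del_verts_def edges_def)

lemma graph_adj: "graph G \<Longrightarrow> adj G u v \<Longrightarrow> u \<in> verts G \<and> v \<in> verts G \<and> u \<noteq> v"
  unfolding graph_def adj_def by (fastforce simp: doubleton_eq_iff)

lemma graph_del: assumes "graph G" shows "graph (del_verts G X)"
  unfolding graph_def
proof
  fix e assume e: "e \<in> edges (del_verts G X)"
  then have "e \<in> edges G" "e \<inter> X = {}" by (auto simp: del_verts_def edges_def)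
  then obtain u v where "u \<noteq> v" "u \<in> verts G" "v \<in> verts G" "e = {u, v}" using assms unfolding graph_def by blast
  then show "\<exists>u v. u \<noteq> v \<and> u \<in> verts (del_verts G X) \<and> v \<in> verts (del_verts G X) \<and> e = {u, v}"
    using `e \<inter> X = {}` by (auto simp: del_verts_def verts_def)
qed

lemma verts_del[simp]: "verts (del_verts G X) = verts G - X"
  by (simp add: del_verts_def verts_def)
lemma edges_del[simp]: "edges (del_verts G X) = {e \<in> edges G. e \<inter> X = {}}"
  by (simp add: del_verts_def edges_def)

lemma rtr_verts: assumes "graph G" "(adj G)\<^sup>*\<^sup>* u v" "u \<in> verts G" shows "v \<in> verts G"
  using assms(2,3) by (induction rule: rtranclp_induct) (auto dest: graph_adj[OF assms(1)])

lemma rtr_mono: "(\<And>a b. P a b \<Longrightarrow> Q a b) \<Longrightarrow> P\<^sup>*\<^sup>* u v \<Longrightarrow> Q\<^sup>*\<^sup>* u v"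
  by (metis mono_rtranclp)

lemma subgraph_adj: "subgraph H G \<Longrightarrow> adj H u v \<Longrightarrow> adj G u v"
  by (auto simp: subgraph_def adj_def)

lemma escape0:
  assumes "Q\<^sup>*\<^sup>* u v" "u \<in> X"
  shows "(v \<in> X \<and> (\<lambda>x y. Q x y \<and> x \<in> X \<and> y \<in> X)\<^sup>*\<^sup>* u v) \<or>
     (\<exists>a b. (\<lambda>x y. Q x y \<and> x \<in> X \<and> y \<in> X)\<^sup>*\<^sup>* u a \<and> a \<in> X \<and> Q a b \<and> b \<notin> X)"
  using assms(1)
proof (induction rule: rtranclp_induct)
  case base show ?case using assms(2) by simp
next
  case (step y z)
  let ?R = "\<lambda>x y. Q x y \<and> x \<in> X \<and> y \<in> X"
  from step.IH show ?case
  proof (elim disjE)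
    assume h: "y \<in> X \<and> ?R\<^sup>*\<^sup>* u y"
    show ?case
    proof (cases "z \<in> X")
      case True
      have "?R y z" using h True step.hyps(2) by simp
      then have "?R\<^sup>*\<^sup>* u z" by (rule rtranclp.rtrancl_into_rtrancl[OF conjunct2[OF h]])
      then show ?thesis using True by (intro disjI1 conjI)
    next
      case False
      show ?thesis using h False step.hyps(2) by (intro disjI2 exI[of _ y] exI[of _ z]) simp
    qed
  next
    assume "\<exists>a b. ?R\<^sup>*\<^sup>* u a \<and> a \<in> X \<and> Q a b \<and> b \<notin> X"
    then show ?case by (rule disjI2)
  qed
qed

lemma escape:
  assumes "Q\<^sup>*\<^sup>* u v" "u \<in> X" "v \<notin> X"
  shows "\<exists>a b. (\<lambda>x y. Q x y \<and> x \<in> X \<and> y \<in> X)\<^sup>*\<^sup>* u a \<and> a \<in> X \<and> Q a b \<and> b \<notin> X"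
proof -
  from escape0[OF assms(1,2)] show ?thesis
  proof (elim disjE)
    assume "v \<in> X \<and> (\<lambda>x y. Q x y \<and> x \<in> X \<and> y \<in> X)\<^sup>*\<^sup>* u v"
    then show ?thesis using assms(3) by simp
  qed
qed

lemma restrict_closed:
  assumes "P\<^sup>*\<^sup>* u v" "u \<in> K" "\<And>a b. a \<in> K \<Longrightarrow> P a b \<Longrightarrow> b \<in> K" "\<And>a b. P a b \<Longrightarrow> Q a b"
  shows "(\<lambda>x y. Q x y \<and> x \<in> K \<and> y \<in> K)\<^sup>*\<^sup>* u v \<and> v \<in> K"
  using assms(1)
proof (induction rule: rtranclp_induct)
  case base then show ?case using assms(2) by simp
next
  case (step y z)
  have zK: "z \<in> K" using assms(3) step.IH step.hyps(2) by blast
  have "Q y z" using assms(4) step.hyps(2) .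
  then have "(\<lambda>x y. Q x y \<and> x \<in> K \<and> y \<in> K) y z" using zK step.IH by simp
  then have "(\<lambda>x y. Q x y \<and> x \<in> K \<and> y \<in> K)\<^sup>*\<^sup>* u z"
    by (rule rtranclp.rtrancl_into_rtrancl[OF conjunct1[OF step.IH]])
  then show ?case using zK by simp
qed

lemma rtr_list:
  assumes "R\<^sup>*\<^sup>* x y"
  shows "\<exists>l. l \<noteq> [] \<and> hd l = x \<and> last l = y \<and> successively R l"
  using assms
proof (induction rule: converse_rtranclp_induct)
  case base then show ?case by (intro exI[of _ "[y]"]) simp
next
  case (step a b)
  then obtain l where l: "l \<noteq> []" "hd l = b" "last l = y" "successively R l" by blast
  then show ?case using step by (intro exI[of _ "a # l"]) (auto simp: successively_Cons)
qed


lemma comp_E: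
  assumes "component H C"
  obtains v where "v \<in> verts H" "verts C = {w. (adj H)\<^sup>*\<^sup>* v w}" "edges C = {e \<in> edges H. e \<subseteq> verts C}"
  using assms unfolding component_def by blast

lemma comp_verts: "graph H \<Longrightarrow> component H C \<Longrightarrow> verts C \<subseteq> verts H"
  by (metis comp_E mem_Collect_eq rtr_verts subsetI)

lemma comp_mem: "component H C \<Longrightarrow> u \<in> verts C \<Longrightarrow> (adj H)\<^sup>*\<^sup>* u v \<Longrightarrow> v \<in> verts C"
  by (smt (verit, ccfv_threshold) comp_E mem_Collect_eq rtranclp_trans)

lemma comp_conn: "component H C \<Longrightarrow> u \<in> verts C \<Longrightarrow> v \<in> verts C \<Longrightarrow> (adj H)\<^sup>*\<^sup>* u v"
  by (smt (verit, ccfv_threshold) comp_E mem_Collect_eq rtranclp_trans rtr_sym)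

lemma comp_edges: "component H C \<Longrightarrow> e \<in> edges H \<Longrightarrow> e \<subseteq> verts C \<Longrightarrow> e \<in> edges C"
  by (metis (mono_tags, lifting) comp_E mem_Collect_eq)

lemma comp_of: "v \<in> verts H \<Longrightarrow> component H ({w. (adj H)\<^sup>*\<^sup>* v w}, {e \<in> edges H. e \<subseteq> {w. (adj H)\<^sup>*\<^sup>* v w}})"
  unfolding component_def verts_def edges_def by auto

lemma comp_root: "v \<in> verts H \<Longrightarrow> v \<in> verts ({w. (adj H)\<^sup>*\<^sup>* v w}, {e \<in> edges H. e \<subseteq> {w. (adj H)\<^sup>*\<^sup>* v w}})"
  by (simp add: verts_def)

lemma ray_tail: assumes "ray H r" "finite X" shows "\<exists>N. \<forall>n\<ge>N. r n \<notin> X"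
proof -
  have "finite (r -` X)" using assms by (intro finite_vimageI) (auto simp: ray_def)
  then obtain N where "\<forall>n\<in>r -` X. n < N"
    by (metis finite_nat_set_iff_bounded)
  then show ?thesis by (metis leD vimageI)
qed

lemma nbhd_I: "a \<in> X \<Longrightarrow> adj G a b \<Longrightarrow> b \<notin> X \<Longrightarrow> b \<in> nbhd G X"
  unfolding nbhd_def by blast

lemma union_adj: "adj (graph_Union F) u v \<longleftrightarrow> (\<exists>i. adj (F i) u v)"
  by (simp add: adj_def graph_Union_def edges_def)

lemma union_verts: "verts (graph_Union F) = (\<Union>i. verts (F i))"
  by (simp add: graph_Union_def verts_def)
lemma union_edges: "edges (graph_Union F) = (\<Union>i. edges (F i))"
  by (simp add: graph_Union_def edges_def)

locale fctx =
  fixes G :: "'a graph" and F :: "nat \<Rightarrow> 'a graph"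
  assumes g: "graph G" and inf: "infinite (verts G)" and lf: "locally_finite G" and conn: "connected_graph G"
    and sub: "\<And>i. subgraph (F i) G" and fin: "\<And>i. finite_graph (F i)" and fconn: "\<And>i. connected_graph (F i)"
    and mono: "\<And>i. subgraph (F i) (F (Suc i))"
    and nb: "\<And>i. nbhd G (verts (F i)) \<subseteq> verts (F (Suc i))"
    and hyp: "\<And>i H. component (del_verts G (verts (F (Suc i)))) H \<Longrightarrow>
           \<exists>D. component (del_verts (F (Suc i)) (verts (F i))) D \<and> nbhd G (verts H) \<subseteq> verts D"
begin

abbreviation "A i \<equiv> verts (F i)"
abbreviation "UF \<equiv> graph_Union F"

lemma A_mono: "i \<le> j \<Longrightarrow> A i \<subseteq> A j"
proof (induction j rule: dec_induct)
  case (step n) then show ?case using mono[of n] by (auto simp: subgraph_def)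
qed simp

lemma A_fin: "finite (A i)" using fin by (simp add: finite_graph_def)
lemma A_ne: "A i \<noteq> {}" using fconn[of i] unfolding connected_graph_def by blast
lemma A_G: "A i \<subseteq> verts G" using sub[of i] unfolding subgraph_def by blast
lemma F_graph: "graph (F i)" using sub[of i] unfolding subgraph_def by blast
lemma F_adj: "adj (F i) u v \<Longrightarrow> adj G u v" using sub[of i] by (rule subgraph_adj)
lemma F_conn: "u \<in> A i \<Longrightarrow> v \<in> A i \<Longrightarrow> (adj (F i))\<^sup>*\<^sup>* u v"
  using fconn[of i] unfolding connected_graph_def by blast

lemma F_UF: "adj (F i) u v \<Longrightarrow> adj UF u v"
  by (auto simp: union_adj)

lemma UF_adj_G: assumes "adj UF u v" shows "adj G u v"
proof -
  have "\<exists>i. adj (F i) u v" using assms by (simp add: union_adj)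
  then obtain i where "adj (F i) u v" by blast
  then show ?thesis by (rule F_adj)
qed

lemma UF_graph: "graph UF"
  unfolding graph_def
proof
  fix e assume "e \<in> edges UF"
  then obtain i where ei: "e \<in> edges (F i)" by (auto simp: union_edges)
  have "\<forall>e\<in>edges (F i). \<exists>u v. u \<noteq> v \<and> u \<in> A i \<and> v \<in> A i \<and> e = {u, v}"
    using F_graph[of i] by (simp add: graph_def)
  then obtain u v where uv: "u \<noteq> v" "u \<in> A i" "v \<in> A i" "e = {u, v}" using ei by blast
  then have "u \<in> verts UF" "v \<in> verts UF" by (auto simp: union_verts)
  then show "\<exists>u v. u \<noteq> v \<and> u \<in> verts UF \<and> v \<in> verts UF \<and> e = {u, v}" using uv by blast
qed

lemma UF_sub: "subgraph UF G"
proof -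
  have "verts UF \<subseteq> verts G" using A_G by (auto simp: union_verts)
  moreover have "edges UF \<subseteq> edges G"
  proof
    fix e assume "e \<in> edges UF"
    then obtain i where "e \<in> edges (F i)" by (auto simp: union_edges)
    then show "e \<in> edges G" using sub[of i] unfolding subgraph_def by blast
  qed
  ultimately show ?thesis unfolding subgraph_def using UF_graph by blast
qed

lemma spanning: "verts G \<subseteq> verts UF"
proof
  fix v assume v: "v \<in> verts G"
  obtain a where a: "a \<in> A 0" using A_ne by blast
  have "a \<in> verts G" using a A_G by blast
  then have "(adj G)\<^sup>*\<^sup>* a v" using conn v unfolding connected_graph_def by blast
  then show "v \<in> verts UF"
  proof (induction rule: rtranclp_induct)
    case base then show ?case using a by (auto simp: union_verts)
  next
    case (step y z)
    from step.IH obtain i where i: "y \<in> A i" by (auto simp: union_verts)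
    show ?case
    proof (cases "z \<in> A i")
      case True then show ?thesis by (auto simp: union_verts)
    next
      case False
      then have "z \<in> nbhd G (A i)" using nbhd_I[OF i step.hyps(2)] by blast
      then have "z \<in> A (Suc i)" using nb[of i] by blast
      then show ?thesis by (auto simp: union_verts)
    qed
  qed
qed

lemma UF_verts: "verts UF = verts G"
  using spanning UF_sub unfolding subgraph_def by blast

lemma fin_sub: "finite S \<Longrightarrow> S \<subseteq> verts G \<Longrightarrow> \<exists>i. S \<subseteq> A i"
proof (induction S rule: finite_induct)
  case empty then show ?case by simp
next
  case (insert x S)
  then obtain i where i: "S \<subseteq> A i" by blast
  have "x \<in> verts UF" using insert.prems spanning by blast
  then obtain j where j: "x \<in> A j" by (auto simp: union_verts)
  have "S \<subseteq> A (max i j)" "x \<in> A (max i j)" using i j A_mono[of i "max i j"] A_mono[of j "max i j"] by auto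
  then show ?case by blast
qed

end

context fctx begin

lemma eqv_FG: assumes "ray_equiv UF r s" shows "ray_equiv G r s"
  unfolding ray_equiv_def
proof (intro allI impI)
  fix S assume S: "finite S \<and> S \<subseteq> verts G"
  then have S': "finite S \<and> S \<subseteq> verts UF" using UF_verts by simp
  obtain C k where C: "component (del_verts UF S) C"
    and k: "\<forall>n\<ge>k. r n \<in> verts C \<and> s n \<in> verts C \<and>
                    {r n, r (Suc n)} \<in> edges C \<and> {s n, s (Suc n)} \<in> edges C"
    using assms[unfolded ray_equiv_def, rule_format, OF S'] by blast
  obtain v where v: "v \<in> verts (del_verts UF S)" "verts C = {w. (adj (del_verts UF S))\<^sup>*\<^sup>* v w}"
    "edges C = {e \<in> edges (del_verts UF S). e \<subseteq> verts C}" using comp_E[OF C] by blast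
  define C' where "C' = ({w. (adj (del_verts G S))\<^sup>*\<^sup>* v w}, {e \<in> edges (del_verts G S). e \<subseteq> {w. (adj (del_verts G S))\<^sup>*\<^sup>* v w}})"
  have vG: "v \<in> verts (del_verts G S)" using v(1) UF_verts by simp
  have C': "component (del_verts G S) C'" unfolding C'_def by (rule comp_of[OF vG])
  have sub1: "verts C \<subseteq> verts C'"
  proof
    fix w assume "w \<in> verts C"
    then have "(adj (del_verts UF S))\<^sup>*\<^sup>* v w" using v(2) by simp
    then have "(adj (del_verts G S))\<^sup>*\<^sup>* v w"
      by (rule rtr_mono[rotated]) (simp add: del_adj UF_adj_G)
    then show "w \<in> verts C'" by (simp add: C'_def verts_def)
  qed
  have eUG: "edges UF \<subseteq> edges G" using UF_sub unfolding subgraph_def by blast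
  have sub2: "edges C \<subseteq> edges C'"
  proof
    fix e assume e: "e \<in> edges C"
    then have e1: "e \<in> edges (del_verts UF S)" "e \<subseteq> verts C" using v(3) by auto
    then have "e \<in> edges (del_verts G S)" using eUG by auto
    moreover have "e \<subseteq> verts C'" using e1(2) sub1 by blast
    ultimately show "e \<in> edges C'" by (rule comp_edges[OF C'])
  qed
  have "\<forall>n\<ge>k. r n \<in> verts C' \<and> s n \<in> verts C' \<and>
                    {r n, r (Suc n)} \<in> edges C' \<and> {s n, s (Suc n)} \<in> edges C'"
    using k sub1 sub2 by blast
  then show "\<exists>C. component (del_verts G S) C \<and>
          (\<exists>k. \<forall>n\<ge>k. r n \<in> verts C \<and> s n \<in> verts C \<and>
                    {r n, r (Suc n)} \<in> edges C \<and> {s n, s (Suc n)} \<in> edges C)"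
    using C' by blast
qed

lemma to_D:
  assumes C': "component (del_verts G (A (Suc i))) C'" and D: "nbhd G (verts C') \<subseteq> verts D"
    and Dc: "component (del_verts (F (Suc i)) (A i)) D"
    and x: "x \<in> verts C'" and S: "S \<subseteq> A i"
  shows "\<exists>c\<in>verts D. (adj (del_verts UF S))\<^sup>*\<^sup>* x c"
proof -
  have C'v: "verts C' \<subseteq> verts G - A (Suc i)" using comp_verts[OF graph_del[OF g] C'] by simp
  have "x \<in> verts UF" using x C'v spanning by blast
  then obtain m where m: "x \<in> A m" by (auto simp: union_verts)
  define M where "M = max m (Suc i)"
  obtain a where a: "a \<in> A (Suc i)" using A_ne by blast
  have aM: "a \<in> A M" "x \<in> A M" using a m A_mono[of m M] A_mono[of "Suc i" M] by (auto simp: M_def)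
  have "(adj (F M))\<^sup>*\<^sup>* x a" using F_conn aM by blast
  moreover have "a \<notin> verts C'" using a C'v by blast
  ultimately obtain a' b where ab: "(\<lambda>x y. adj (F M) x y \<and> x \<in> verts C' \<and> y \<in> verts C')\<^sup>*\<^sup>* x a'"
    "a' \<in> verts C'" "adj (F M) a' b" "b \<notin> verts C'"
    using escape[of "adj (F M)" x a "verts C'"] x by blast
  have "b \<in> nbhd G (verts C')" by (rule nbhd_I[OF ab(2) F_adj[OF ab(3)] ab(4)])
  then have bD: "b \<in> verts D" using D by blast
  have SA: "S \<subseteq> A (Suc i)" using S A_mono[of i "Suc i"] by auto
  have p1: "(adj (del_verts UF S))\<^sup>*\<^sup>* x a'"
    using ab(1) by (rule rtr_mono[rotated]) (use C'v SA F_UF in \<open>auto simp: del_adj\<close>)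
  have "b \<notin> A i" using bD comp_verts[OF graph_del[OF F_graph] Dc] by auto
  have "adj (del_verts UF S) a' b" using ab `b \<notin> A i` S C'v SA by (auto simp: del_adj intro: F_UF)
  then have "(adj (del_verts UF S))\<^sup>*\<^sup>* x b" by (rule rtranclp.rtrancl_into_rtrancl[OF p1])
  then show ?thesis using bD by blast
qed


lemma tail_in:
  assumes C: "component H C" and rk: "r k \<in> verts C"
    and st: "\<And>n. n \<ge> k \<Longrightarrow> adj H (r n) (r (Suc n))"
  shows "\<forall>n\<ge>k. r n \<in> verts C"
proof (intro allI impI)
  fix n assume "k \<le> n"
  then show "r n \<in> verts C"
  proof (induction n rule: dec_induct)
    case base then show ?case using rk .
  next
    case (step n) then show ?case using comp_mem[OF C] st
      by (meson r_into_rtranclp)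
  qed
qed

lemma eqv_GF: assumes r: "ray UF r" and s: "ray UF s" and e: "ray_equiv G r s" shows "ray_equiv UF r s"
  unfolding ray_equiv_def
proof (intro allI impI)
  fix S assume S: "finite S \<and> S \<subseteq> verts UF"
  then have "finite S" "S \<subseteq> verts G" using UF_verts by auto
  then obtain i where i: "S \<subseteq> A i" using fin_sub by blast
  have SA: "S \<subseteq> A (Suc i)" using i A_mono[of i "Suc i"] by auto
  obtain C' k where C': "component (del_verts G (A (Suc i))) C'"
    and k: "\<forall>n\<ge>k. r n \<in> verts C' \<and> s n \<in> verts C' \<and>
                    {r n, r (Suc n)} \<in> edges C' \<and> {s n, s (Suc n)} \<in> edges C'"
    using e A_fin A_G unfolding ray_equiv_def by meson
  have C'v: "verts C' \<subseteq> verts G - A (Suc i)" using comp_verts[OF graph_del[OF g] C'] by simp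
  obtain D where Dc: "component (del_verts (F (Suc i)) (A i)) D" and D: "nbhd G (verts C') \<subseteq> verts D"
    using hyp[OF C'] by blast
  obtain c where c: "c \<in> verts D" "(adj (del_verts UF S))\<^sup>*\<^sup>* (r k) c"
    using to_D[OF C' D Dc _ i] k by blast
  obtain c' where c': "c' \<in> verts D" "(adj (del_verts UF S))\<^sup>*\<^sup>* (s k) c'"
    using to_D[OF C' D Dc _ i] k by blast
  have "(adj (del_verts (F (Suc i)) (A i)))\<^sup>*\<^sup>* c c'" using comp_conn[OF Dc] c c' by blast
  then have "(adj (del_verts UF S))\<^sup>*\<^sup>* c c'"
    by (rule rtr_mono[rotated]) (use i F_UF in \<open>auto simp: del_adj\<close>)
  then have rs: "(adj (del_verts UF S))\<^sup>*\<^sup>* (r k) (s k)"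
    using c c' rtr_sym by (meson rtranclp_trans)
  have rkv: "r k \<in> verts (del_verts UF S)" using k C'v SA UF_verts by auto
  define C where "C = ({w. (adj (del_verts UF S))\<^sup>*\<^sup>* (r k) w}, {e \<in> edges (del_verts UF S). e \<subseteq> {w. (adj (del_verts UF S))\<^sup>*\<^sup>* (r k) w}})"
  have C: "component (del_verts UF S) C" unfolding C_def by (rule comp_of[OF rkv])
  have rkC: "r k \<in> verts C" "s k \<in> verts C" using rs by (auto simp: C_def verts_def)
  have nS: "\<And>n. n \<ge> k \<Longrightarrow> r n \<notin> S \<and> s n \<notin> S" using k C'v SA by blast
  have adjr: "\<And>n. n \<ge> k \<Longrightarrow> adj (del_verts UF S) (r n) (r (Suc n))"
    using r nS by (simp add: del_adj ray_def)
  have adjs: "\<And>n. n \<ge> k \<Longrightarrow> adj (del_verts UF S) (s n) (s (Suc n))"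
    using s nS by (simp add: del_adj ray_def)
  have tr: "\<forall>n\<ge>k. r n \<in> verts C" by (rule tail_in[OF C rkC(1) adjr])
  have ts: "\<forall>n\<ge>k. s n \<in> verts C" by (rule tail_in[OF C rkC(2) adjs])
  have "\<forall>n\<ge>k. r n \<in> verts C \<and> s n \<in> verts C \<and>
                    {r n, r (Suc n)} \<in> edges C \<and> {s n, s (Suc n)} \<in> edges C"
  proof (intro allI impI conjI)
    fix n assume n: "k \<le> n"
    show "r n \<in> verts C" "s n \<in> verts C" using tr ts n by auto
    show "{r n, r (Suc n)} \<in> edges C"
      using comp_edges[OF C] adjr[OF n] tr n by (simp add: adj_def)
    show "{s n, s (Suc n)} \<in> edges C"
      using comp_edges[OF C] adjs[OF n] ts n by (simp add: adj_def)
  qed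
  then show "\<exists>C. component (del_verts UF S) C \<and>
          (\<exists>k. \<forall>n\<ge>k. r n \<in> verts C \<and> s n \<in> verts C \<and>
                    {r n, r (Suc n)} \<in> edges C \<and> {s n, s (Suc n)} \<in> edges C)"
    using C by blast
qed


lemma succ_set: "successively (\<lambda>u v. Q u v \<and> u \<in> K \<and> v \<in> K) l \<Longrightarrow> hd l \<in> K \<Longrightarrow> set l \<subseteq> K"
  by (induction l rule: induct_list012) auto

lemma rtr_symp: "symp P \<Longrightarrow> P\<^sup>*\<^sup>* a b \<Longrightarrow> P\<^sup>*\<^sup>* b a" by (metis symp_rtranclp sympD)

lemma ray_approx: assumes r: "ray G r" shows "\<exists>s. ray UF s \<and> ray_equiv G r s"
proof -
  have "\<forall>i. \<exists>N. \<forall>n\<ge>N. r n \<notin> A (Suc i)" using ray_tail[OF r A_fin] by blast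
  then obtain N where N: "\<And>i n. n \<ge> N i \<Longrightarrow> r n \<notin> A (Suc i)" by metis
  define Hv where "Hv i = {w. (adj (del_verts G (A (Suc i))))\<^sup>*\<^sup>* (r (N i)) w}" for i
  define Hc where "Hc i = (Hv i, {e \<in> edges (del_verts G (A (Suc i))). e \<subseteq> Hv i})" for i
  have rN: "r (N i) \<in> verts (del_verts G (A (Suc i)))" for i using r N by (simp add: ray_def)
  have Hc: "component (del_verts G (A (Suc i))) (Hc i)" for i
    unfolding Hc_def Hv_def by (rule comp_of[OF rN])
  have vHc[simp]: "verts (Hc i) = Hv i" for i by (simp add: Hc_def verts_def)
  have H2: "Hv i \<subseteq> verts G - A (Suc i)" for i using comp_verts[OF graph_del[OF g] Hc[of i]] by simp
  have rNH: "r (N i) \<in> Hv i" for i by (simp add: Hv_def)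
  have H1: "\<forall>n\<ge>N i. r n \<in> Hv i" for i
  proof -
    have "\<forall>n\<ge>N i. r n \<in> verts (Hc i)"
    proof (rule tail_in[OF Hc[of i]])
      show "r (N i) \<in> verts (Hc i)" using rNH by simp
      fix n assume "n \<ge> N i"
      then show "adj (del_verts G (A (Suc i))) (r n) (r (Suc n))"
        using r N[of i n] N[of i "Suc n"] by (simp add: ray_def del_adj)
    qed
    then show ?thesis by simp
  qed
  have H3: "Hv (Suc i) \<subseteq> Hv i" for i
  proof
    fix w assume w: "w \<in> Hv (Suc i)"
    define n where "n = max (N i) (N (Suc i))"
    have n1: "r n \<in> Hv i" "r n \<in> Hv (Suc i)" using H1 n_def by auto
    have "(adj (del_verts G (A (Suc (Suc i)))))\<^sup>*\<^sup>* (r n) w"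
      using comp_conn[OF Hc[of "Suc i"]] n1 w by simp
    then have "(adj (del_verts G (A (Suc i))))\<^sup>*\<^sup>* (r n) w"
      by (rule rtr_mono[rotated]) (use A_mono[of "Suc i" "Suc (Suc i)"] in \<open>auto simp: del_adj\<close>)
    then show "w \<in> Hv i" using comp_mem[OF Hc[of i]] n1 by simp
  qed
  have H4: "Hv i \<subseteq> Hv j" if "j \<le> i" for i j
    using that
  proof (induction i rule: dec_induct)
    case (step n) then show ?case using H3[of n] by blast
  qed simp
  have "\<forall>i. \<exists>D. component (del_verts (F (Suc i)) (A i)) D \<and> nbhd G (Hv i) \<subseteq> verts D"
    using hyp Hc vHc by metis
  then obtain Dm where Dc: "\<And>i. component (del_verts (F (Suc i)) (A i)) (Dm i)"
    and Dn: "\<And>i. nbhd G (Hv i) \<subseteq> verts (Dm i)" by metis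
  have Dv: "verts (Dm i) \<subseteq> A (Suc i) - A i" for i
    using comp_verts[OF graph_del[OF F_graph] Dc[of i]] by simp
  have nbne: "\<exists>b. b \<in> nbhd G (Hv i)" for i
  proof -
    obtain a where a: "a \<in> A (Suc i)" using A_ne by blast
    have aG: "a \<in> verts G" using a A_G[of "Suc i"] by blast
    have "r (N i) \<in> verts G" using rN[of i] by simp
    then have "(adj G)\<^sup>*\<^sup>* (r (N i)) a" using conn aG unfolding connected_graph_def by blast
    moreover have "a \<notin> Hv i" using H2 a by blast
    ultimately obtain a' b where ab: "a' \<in> Hv i" "adj G a' b" "b \<notin> Hv i"
      using escape[of "adj G" "r (N i)" a "Hv i"] rNH by blast
    have "b \<in> nbhd G (Hv i)" by (rule nbhd_I[OF ab])
    then show ?thesis by blast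
  qed
  define x where "x i = (SOME b. b \<in> nbhd G (Hv i))" for i
  have xn: "x i \<in> nbhd G (Hv i)" for i unfolding x_def using nbne by (metis someI_ex)
  have xD: "x i \<in> verts (Dm i)" for i using xn Dn by blast
  have xA: "x i \<in> A (Suc i)" "x i \<notin> A i" for i using xD Dv by blast+
  have xnH: "x i \<notin> Hv i" for i using xn by (simp add: nbhd_def)
  have X2: "x (Suc i) \<in> Hv i" for i
  proof -
    obtain h where h: "h \<in> Hv (Suc i)" "adj G h (x (Suc i))" using xn[of "Suc i"] by (auto simp: nbhd_def)
    have hi: "h \<in> Hv i" using h H3 by blast
    have "adj (del_verts G (A (Suc i))) h (x (Suc i))"
      using h(2) xA(2)[of "Suc i"] H2[of i] hi by (simp add: del_adj) blast
    then show ?thesis using comp_mem[OF Hc[of i]] hi by (metis vHc r_into_rtranclp)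
  qed
  have DH: "verts (Dm (Suc j)) \<subseteq> Hv j" for j
  proof
    fix y assume y: "y \<in> verts (Dm (Suc j))"
    have "(adj (del_verts (F (Suc (Suc j))) (A (Suc j))))\<^sup>*\<^sup>* (x (Suc j)) y"
      using comp_conn[OF Dc] xD y by blast
    then have "(adj (del_verts G (A (Suc j))))\<^sup>*\<^sup>* (x (Suc j)) y"
      by (rule rtr_mono[rotated]) (auto simp: del_adj intro: F_adj)
    then show "y \<in> Hv j" using comp_mem[OF Hc[of j]] X2[of j] by simp
  qed
  define R where "R j = (\<lambda>u v. adj UF u v \<and> u \<in> Hv j \<and> v \<in> Hv j)" for j
  have Rsym: "symp (R j)" for j unfolding R_def symp_def using adj_sym by metis
  have path: "(R j)\<^sup>*\<^sup>* (x (Suc j)) (x (Suc (Suc j)))" for j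
  proof -
    define M where "M = Suc (Suc (Suc j))"
    have xM: "x (Suc (Suc j)) \<in> A M" "x (Suc j) \<in> A M"
      using xA A_mono[of "Suc (Suc j)" M] by (auto simp: M_def)
    have c: "(adj (F M))\<^sup>*\<^sup>* (x (Suc (Suc j))) (x (Suc j))" using F_conn xM by blast
    have i1: "x (Suc (Suc j)) \<in> Hv (Suc j)" using X2 by blast
    have i2: "x (Suc j) \<notin> Hv (Suc j)" using xA(1)[of "Suc j"] H2[of "Suc j"] by blast
    obtain a b where ab: "(\<lambda>u v. adj (F M) u v \<and> u \<in> Hv (Suc j) \<and> v \<in> Hv (Suc j))\<^sup>*\<^sup>* (x (Suc (Suc j))) a"
      "a \<in> Hv (Suc j)" "adj (F M) a b" "b \<notin> Hv (Suc j)"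
      using escape[OF c i1 i2] by blast
    have p1: "(R j)\<^sup>*\<^sup>* (x (Suc (Suc j))) a"
      using ab(1) by (rule rtr_mono[rotated]) (use H3 F_UF in \<open>auto simp: R_def\<close>)
    have "b \<in> nbhd G (Hv (Suc j))" by (rule nbhd_I[OF ab(2) F_adj[OF ab(3)] ab(4)])
    then have bD: "b \<in> verts (Dm (Suc j))" using Dn[of "Suc j"] by blast
    have bH: "b \<in> Hv j" using bD DH by blast
    have aH: "a \<in> Hv j" using ab(2) H3 by blast
    have p2: "R j a b" using ab aH bH F_UF unfolding R_def by blast
    have "(adj (del_verts (F (Suc (Suc j))) (A (Suc j))))\<^sup>*\<^sup>* b (x (Suc j))"
      using comp_conn[OF Dc] bD xD by blast
    then have "(R j)\<^sup>*\<^sup>* b (x (Suc j)) \<and> x (Suc j) \<in> Hv j"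
      unfolding R_def
    proof (rule restrict_closed[OF _ bH])
      fix u v assume uv: "u \<in> Hv j" "adj (del_verts (F (Suc (Suc j))) (A (Suc j))) u v"
      then have "adj (del_verts G (A (Suc j))) u v" by (auto simp: del_adj intro: F_adj)
      then show "v \<in> Hv j" using comp_mem[OF Hc[of j]] uv by (metis vHc r_into_rtranclp)
    next
      fix u v assume "adj (del_verts (F (Suc (Suc j))) (A (Suc j))) u v"
      then show "adj UF u v" by (auto simp: del_adj intro: F_UF)
    qed
    then have "(R j)\<^sup>*\<^sup>* (x (Suc (Suc j))) (x (Suc j))" using p1 p2
      by (meson rtranclp.rtrancl_into_rtrancl rtranclp_trans)
    then show ?thesis using rtr_symp[OF Rsym] by blast
  qed
  have "\<forall>j. \<exists>l. l \<noteq> [] \<and> hd l = x (Suc j) \<and> last l = x (Suc (Suc j)) \<and> successively (R j) l"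
    using path rtr_list by metis
  then obtain L where L: "\<And>j. L j \<noteq> [] \<and> hd (L j) = x (Suc j) \<and> last (L j) = x (Suc (Suc j)) \<and> successively (R j) (L j)"
    by metis
  have Lset: "set (L j) \<subseteq> Hv j" for j
    using succ_set[where Q="adj UF" and K="Hv j" and l="L j"] L[of j] X2[of j] unfolding R_def by auto
  have Llen: "2 \<le> length (L j)" for j
  proof -
    have "x (Suc j) \<noteq> x (Suc (Suc j))" using X2[of "Suc j"] xnH[of "Suc j"] by auto
    moreover obtain a t where at: "L j = a # t" using L[of j] by (cases "L j") auto
    ultimately have "t \<noteq> []" using L[of j] by auto
    then show ?thesis using at by (cases t) auto
  qed
  have Lsc: "successively (adj UF) (L j)" for j
    using L[of j] by (auto simp: R_def elim: successively_mono)
  have Llh: "last (L j) = hd (L (Suc j))" for j using L by simp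
  obtain w where w: "\<forall>n. adj UF (w n) (w (Suc n))"
    and wev: "\<forall>j. \<exists>n0. \<forall>n\<ge>n0. \<exists>j'\<ge>j. w n \<in> set (L j')"
    using walk_exists[of L "adj UF", OF Llen Lsc Llh] by blast
  have wH: "\<exists>n0. \<forall>n\<ge>n0. w n \<in> Hv j" for j
  proof -
    obtain n0 where n0: "\<forall>n\<ge>n0. \<exists>j'\<ge>j. w n \<in> set (L j')" using wev by blast
    have "w n \<in> Hv j" if nn: "n \<ge> n0" for n
    proof -
      obtain j' where j': "j' \<ge> j" "w n \<in> set (L j')" using n0 nn by blast
      have "Hv j' \<subseteq> Hv j" using H4 j'(1) .
      then show ?thesis using j'(2) Lset[of j'] by blast
    qed
    then show ?thesis by blast
  qed
  have wG: "w n \<in> verts G" for n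
  proof -
    have "adj G (w n) (w (Suc n))" using w UF_adj_G by blast
    then show ?thesis using graph_adj[OF g] by blast
  qed
  have fo: "finite {n. w n = v}" for v
  proof (cases "v \<in> verts G")
    case True
    then obtain i where "v \<in> A i" using spanning by (auto simp: union_verts)
    then have vi: "v \<notin> Hv i" using H2[of i] A_mono[of i "Suc i"] by auto
    obtain n0 where n0: "\<forall>n\<ge>n0. w n \<in> Hv i" using wH by blast
    have "{n. w n = v} \<subseteq> {..<n0}"
    proof
      fix n assume "n \<in> {n. w n = v}"
      then have wn: "w n = v" by simp
      show "n \<in> {..<n0}"
      proof (rule ccontr)
        assume "n \<notin> {..<n0}"
        then have "w n \<in> Hv i" using n0 by simp
        then show False using vi wn by simp
      qed
    qed
    then show ?thesis using finite_subset by blast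
  next
    case False
    then have "{n. w n = v} = {}" using wG by auto
    then show ?thesis by simp
  qed
  obtain s where s: "inj s" "\<forall>k. adj UF (s k) (s (Suc k))" "\<forall>k. \<exists>n\<ge>k. s k = w n"
    using ray_extract[of "adj UF" w, OF _ fo] w by blast
  have sray: "ray UF s" unfolding ray_def using s graph_adj[OF UF_graph] by blast
  have sH: "\<exists>k0. \<forall>k\<ge>k0. s k \<in> Hv j" for j
  proof -
    obtain n0 where n0: "\<forall>n\<ge>n0. w n \<in> Hv j" using wH by blast
    have "s k \<in> Hv j" if "k \<ge> n0" for k using s(3) n0 that by (metis le_trans)
    then show ?thesis by blast
  qed
  have "ray_equiv G r s"
    unfolding ray_equiv_def
  proof (intro allI impI)
    fix S assume S: "finite S \<and> S \<subseteq> verts G"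
    then obtain i where i: "S \<subseteq> A i" using fin_sub by blast
    have SA: "S \<subseteq> A (Suc i)" using i A_mono[of i "Suc i"] by auto
    have rv: "r (N i) \<in> verts (del_verts G S)" using rN SA by auto
    define C where "C = ({w. (adj (del_verts G S))\<^sup>*\<^sup>* (r (N i)) w}, {e \<in> edges (del_verts G S). e \<subseteq> {w. (adj (del_verts G S))\<^sup>*\<^sup>* (r (N i)) w}})"
    have C: "component (del_verts G S) C" unfolding C_def by (rule comp_of[OF rv])
    have HC: "Hv i \<subseteq> verts C"
    proof
      fix y assume "y \<in> Hv i"
      then have "(adj (del_verts G (A (Suc i))))\<^sup>*\<^sup>* (r (N i)) y" by (simp add: Hv_def)
      then have "(adj (del_verts G S))\<^sup>*\<^sup>* (r (N i)) y"
        by (rule rtr_mono[rotated]) (use SA in \<open>auto simp: del_adj\<close>)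
      then show "y \<in> verts C" by (simp add: C_def verts_def)
    qed
    obtain k0 where k0: "\<forall>k\<ge>k0. s k \<in> Hv i" using sH by blast
    define k where "k = max k0 (N i)"
    have "\<forall>n\<ge>k. r n \<in> verts C \<and> s n \<in> verts C \<and>
                    {r n, r (Suc n)} \<in> edges C \<and> {s n, s (Suc n)} \<in> edges C"
    proof (intro allI impI conjI)
      fix n assume n: "k \<le> n"
      have rin: "r n \<in> Hv i" "r (Suc n) \<in> Hv i" "s n \<in> Hv i" "s (Suc n) \<in> Hv i"
        using H1 k0 n k_def by auto
      then show "r n \<in> verts C" "s n \<in> verts C" using HC by auto
      have "{r n, r (Suc n)} \<in> edges G" using r by (simp add: ray_def adj_def)
      then show "{r n, r (Suc n)} \<in> edges C"
        using comp_edges[OF C] rin HC H2[of i] SA by auto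
      have "{s n, s (Suc n)} \<in> edges G" using s(2) UF_adj_G by (simp add: adj_def)
      then show "{s n, s (Suc n)} \<in> edges C"
        using comp_edges[OF C] rin HC H2[of i] SA by auto
    qed
    then show "\<exists>C. component (del_verts G S) C \<and>
          (\<exists>k. \<forall>n\<ge>k. r n \<in> verts C \<and> s n \<in> verts C \<and>
                    {r n, r (Suc n)} \<in> edges C \<and> {s n, s (Suc n)} \<in> edges C)"
      using C by blast
  qed
  then show ?thesis using sray by blast
qed

end

theorem lemma12:
  fixes G :: "'a graph" and F :: "nat \<Rightarrow> 'a graph"
  assumes "graph G" and "infinite (verts G)" and "locally_finite G" and "connected_graph G"
    and "\<And>i. subgraph (F i) G" and "\<And>i. finite_graph (F i)" and "\<And>i. connected_graph (F i)"
    and "\<And>i. subgraph (F i) (F (Suc i))"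
    and "\<And>i. nbhd G (verts (F i)) \<subseteq> verts (F (Suc i))"
    and "\<And>i H. component (del_verts G (verts (F (Suc i)))) H \<Longrightarrow>
           \<exists>D. component (del_verts (F (Suc i)) (verts (F i))) D \<and> nbhd G (verts H) \<subseteq> verts D"
  shows "spanning_subgraph (graph_Union F) G \<and> faithful (graph_Union F) G"
proof -
  interpret fctx G F using assms by (unfold_locales) auto
  show ?thesis
    unfolding spanning_subgraph_def faithful_def
    using UF_sub UF_verts ray_approx eqv_FG eqv_GF by blast
qed

end
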